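(* Let $0<\varepsilon<1$. Let $\mathcal C'$ be any clustering of $V$ that does not split any atom of $\mathcal K$ and such that for every $u\in V$ and every $C\in\mathcal C'$ with $K_u\subsetneq C$ we have $w(u,C)>\frac{|C|}{2}+\varepsilon w_u$. Then for every $C\in\mathcal C'$ and every $u,v\in C$, $w_u>\varepsilon w_v$.
   Context: A Correlation Clustering instance consists of a finite vertex set $V$ and a partition $E^+\uplus E^-=\binom V2$ of unordered pairs of distinct vertices into $+$edges and $-$edges. $\mathcal K$ is a partition of $V$ into atoms, and every pair of distinct vertices in a common atom is a $+$edge. For $u\in V$, $K_u$ is the atom containing $u$ and $k_u=|K_u|$. For $u,v\in V$ (possibly equal), $w_{uv}=\frac1{k_uk_v}\sum_{u'\in K_u,v'\in K_v}\mathbf 1[u'v'\text{ is a }+\text{edge or }u'=v']\in[0,1]$; for $V'\subseteq V$, $w(u,V')=\sum_{v\in V'}w_{uv}$, and $w_u=w(u,V)$. *)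

theory Defs
  imports Complex_Main "HOL-Library.Disjoint_Sets"
begin

text \<open>Correlation clustering instance: vertex set V, the +edges are given by a
symmetric relation Pl on V (pairs not in Pl are -edges). Atoms form a partition
\<K> of V.\<close>

definition atom :: "'a set set \<Rightarrow> 'a \<Rightarrow> 'a set" where
  "atom \<K> u = (THE K. K \<in> \<K> \<and> u \<in> K)"

definition wt :: "('a \<Rightarrow> 'a \<Rightarrow> bool) \<Rightarrow> 'a set set \<Rightarrow> 'a \<Rightarrow> 'a \<Rightarrow> real" where
  "wt Pl \<K> u v =
     (\<Sum>u'\<in>atom \<K> u. \<Sum>v'\<in>atom \<K> v. if Pl u' v' \<or> u' = v' then 1 else 0)
       / (real (card (atom \<K> u)) * real (card (atom \<K> v)))"

definition wset :: "('a \<Rightarrow> 'a \<Rightarrow> bool) \<Rightarrow> 'a set set \<Rightarrow> 'a \<Rightarrow> 'a set \<Rightarrow> real" where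
  "wset Pl \<K> u S = (\<Sum>v\<in>S. wt Pl \<K> u v)"

end

theory Submission
  imports Defs
begin

lemma part_uniq:
  assumes P: "partition_on V K" and "A \<in> K" "B \<in> K" "x \<in> A" "x \<in> B"
  shows "A = B"
proof -
  have "disjoint K" using P by (simp add: partition_on_def)
  thus ?thesis using assms(2-5) by (meson disjointD disjoint_iff)
qed

lemma atom_props:
  assumes P: "partition_on V K" and u: "u \<in> V"
  shows "atom K u \<in> K \<and> u \<in> atom K u"
proof -
  have "\<Union>K = V" using P by (simp add: partition_on_def)
  then obtain A where A: "A \<in> K" "u \<in> A" using u by auto
  have U: "B = A" if "B \<in> K" "u \<in> B" for B
    using part_uniq[OF P that(1) A(1) that(2) A(2)] .
  have "atom K u = A" unfolding atom_def by (rule the_equality) (use A U in blast)+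
  thus ?thesis using A by simp
qed

lemma atom_eq:
  assumes P: "partition_on V K" and u: "u \<in> V" and "v \<in> atom K u"
  shows "atom K v = atom K u"
proof -
  have au: "atom K u \<in> K" "u \<in> atom K u" using atom_props[OF P u] by auto
  have vV: "v \<in> V" using P au assms(3) unfolding partition_on_def by blast
  have av: "atom K v \<in> K" "v \<in> atom K v" using atom_props[OF P vV] by auto
  show ?thesis using part_uniq[OF P av(1) au(1) av(2)] assms(3) by blast
qed

lemma wt_nonneg: "wt Pl K u v \<ge> 0"
  unfolding wt_def by (intro divide_nonneg_nonneg sum_nonneg) auto

lemma wt_le1:
  assumes P: "partition_on V K" and finV: "finite V" and u: "u \<in> V" and v: "v \<in> V"
  shows "wt Pl K u v \<le> 1"
proof -
  have au: "atom K u \<in> K" "u \<in> atom K u" using atom_props[OF P u] by auto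
  have av: "atom K v \<in> K" "v \<in> atom K v" using atom_props[OF P v] by auto
  have fu: "finite (atom K u)" using au P finV unfolding partition_on_def
    by (meson Union_upper finite_subset)
  have fv: "finite (atom K v)" using av P finV unfolding partition_on_def
    by (meson Union_upper finite_subset)
  have cu: "card (atom K u) > 0" using fu au card_gt_0_iff by blast
  have cv: "card (atom K v) > 0" using fv av card_gt_0_iff by blast
  have "(\<Sum>u'\<in>atom K u. \<Sum>v'\<in>atom K v. if Pl u' v' \<or> u' = v' then 1 else 0)
       \<le> (\<Sum>u'\<in>atom K u. \<Sum>v'\<in>atom K v. (1::real))"
    by (intro sum_mono) auto
  also have "\<dots> = real (card (atom K u)) * real (card (atom K v))" by simp
  finally show ?thesis unfolding wt_def using cu cv by (simp add: divide_le_eq_1)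
qed

lemma wt_self:
  assumes P: "partition_on V K" and finV: "finite V" and u: "u \<in> V"
    and Kc: "\<And>A x y. A \<in> K \<Longrightarrow> x \<in> A \<Longrightarrow> y \<in> A \<Longrightarrow> x \<noteq> y \<Longrightarrow> Pl x y"
  shows "wt Pl K u u = 1"
proof -
  have au: "atom K u \<in> K" "u \<in> atom K u" using atom_props[OF P u] by auto
  have fu: "finite (atom K u)" using au P finV unfolding partition_on_def
    by (meson Union_upper finite_subset)
  have cu: "card (atom K u) > 0" using fu au card_gt_0_iff by blast
  have "(\<Sum>u'\<in>atom K u. \<Sum>v'\<in>atom K u. if Pl u' v' \<or> u' = v' then 1 else 0)
       = (\<Sum>u'\<in>atom K u. \<Sum>v'\<in>atom K u. (1::real))"
    using Kc[OF au(1)] by (intro sum.cong refl) auto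
  also have "\<dots> = real (card (atom K u)) * real (card (atom K u))" by simp
  finally show ?thesis unfolding wt_def using cu by simp
qed

theorem lemma10:
  fixes V :: "'a set" and Pl :: "'a \<Rightarrow> 'a \<Rightarrow> bool"
    and \<K> \<C> :: "'a set set" and \<epsilon> :: real
  assumes finV: "finite V"
    and Pl_in: "\<And>x y. Pl x y \<Longrightarrow> x \<in> V \<and> y \<in> V \<and> x \<noteq> y"
    and Pl_sym: "\<And>x y. Pl x y \<Longrightarrow> Pl y x"
    and K_part: "partition_on V \<K>"
    and K_clique: "\<And>K x y. K \<in> \<K> \<Longrightarrow> x \<in> K \<Longrightarrow> y \<in> K \<Longrightarrow> x \<noteq> y \<Longrightarrow> Pl x y"
    and eps: "0 < \<epsilon>" "\<epsilon> < 1"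
    and C_part: "partition_on V \<C>"
    and C_nosplit: "\<And>K. K \<in> \<K> \<Longrightarrow> \<exists>C\<in>\<C>. K \<subseteq> C"
    and C_cond: "\<And>u C. u \<in> V \<Longrightarrow> C \<in> \<C> \<Longrightarrow> atom \<K> u \<subset> C \<Longrightarrow>
        wset Pl \<K> u C > real (card C) / 2 + \<epsilon> * wset Pl \<K> u V"
  shows "\<forall>C\<in>\<C>. \<forall>u\<in>C. \<forall>v\<in>C. wset Pl \<K> u V > \<epsilon> * wset Pl \<K> v V"
proof (intro ballI)
  fix C u v assume C: "C \<in> \<C>" and uC: "u \<in> C" and vC: "v \<in> C"
  have CV: "C \<subseteq> V" using C C_part unfolding partition_on_def by blast
  have u: "u \<in> V" and v: "v \<in> V" using CV uC vC by auto
  have wpos: "wset Pl \<K> x V > 0" if x: "x \<in> V" for x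
  proof -
    have "wset Pl \<K> x V = wt Pl \<K> x x + wset Pl \<K> x (V - {x})"
      unfolding wset_def using finV x by (simp add: sum.remove)
    moreover have "wset Pl \<K> x (V - {x}) \<ge> 0" unfolding wset_def
      by (intro sum_nonneg wt_nonneg)
    ultimately show ?thesis using wt_self[OF K_part finV x K_clique] by simp
  qed
  have sub: "atom \<K> x \<subseteq> C" if x: "x \<in> C" for x
  proof -
    have xV: "x \<in> V" using x CV by auto
    have ax: "atom \<K> x \<in> \<K>" "x \<in> atom \<K> x" using atom_props[OF K_part xV] by auto
    obtain C' where C': "C' \<in> \<C>" "atom \<K> x \<subseteq> C'" using C_nosplit[OF ax(1)] by blast
    have "C' = C" using part_uniq[OF C_part C'(1) C] C' x ax(2) by blast
    thus ?thesis using C' by simp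
  qed
  show "wset Pl \<K> u V > \<epsilon> * wset Pl \<K> v V"
  proof (cases "atom \<K> u = atom \<K> v")
    case True
    have "wset Pl \<K> u V = wset Pl \<K> v V" unfolding wset_def wt_def True by simp
    thus ?thesis using wpos[OF v] eps by (simp add: mult_less_cancel_right1)
  next
    case False
    have au: "u \<in> atom \<K> u" using atom_props[OF K_part u] by auto
    have av: "v \<in> atom \<K> v" using atom_props[OF K_part v] by auto
    have su: "atom \<K> u \<subset> C"
    proof -
      have "atom \<K> u \<noteq> C"
      proof
        assume "atom \<K> u = C"
        hence "v \<in> atom \<K> u" using vC by simp
        from atom_eq[OF K_part u this] False show False by simp
      qed
      thus ?thesis using sub[OF uC] by blast
    qed
    have sv: "atom \<K> v \<subset> C"
    proof -
      have "atom \<K> v \<noteq> C"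
      proof
        assume "atom \<K> v = C"
        hence "u \<in> atom \<K> v" using uC by simp
        from atom_eq[OF K_part v this] False show False by simp
      qed
      thus ?thesis using sub[OF vC] by blast
    qed
    have fC: "finite C" using CV finV finite_subset by blast
    have h1: "wset Pl \<K> u C > real (card C) / 2 + \<epsilon> * wset Pl \<K> u V"
      using C_cond[OF u C su] .
    have h2: "wset Pl \<K> v C > real (card C) / 2 + \<epsilon> * wset Pl \<K> v V"
      using C_cond[OF v C sv] .
    have h3: "wset Pl \<K> v C \<le> real (card C)"
    proof -
      have "wset Pl \<K> v C \<le> (\<Sum>x\<in>C. (1::real))" unfolding wset_def
        using CV by (intro sum_mono wt_le1[OF K_part finV v]) auto
      thus ?thesis by simp
    qed
    have h4: "wset Pl \<K> u C \<le> wset Pl \<K> u V" unfolding wset_def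
      using finV CV by (intro sum_mono2) (auto intro: wt_nonneg)
    have h5: "\<epsilon> * wset Pl \<K> u V \<ge> 0" using eps wpos[OF u] by simp
    show ?thesis using h1 h2 h3 h4 h5 by linarith
  qed
qed

end
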